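(* Let $N_0>d$, let $w\ge0$ on $\mathbb{R}^d$ and set $\widetilde w(x)=\sup_{|y-x|\le1}w(y)$ and $\mathcal{A}w=\Psi^{(N_0)}*\widetilde w$ with $\Psi^{(N_0)}(x)=(1+|x|^2)^{-N_0/2}$; assume $0<\mathcal{A}w(x)<\infty$ for all $x$. Then for every $\ell\in\mathbb{R}$ and every multi-index $\gamma\in\mathbb{N}^d$ there is $C$ depending only on $d,N_0,\ell,\gamma$ such that for all $x\in\mathbb{R}^d$, $$|D^\gamma(\mathcal{A}w)^\ell(x)|\le C(\mathcal{A}w)^\ell(x)\le C^2(1+|x|^2)^{N_0|\ell|/2}(\mathcal{A}w)^\ell(0).$$
   Context: $D^\gamma$ denotes the partial derivative of multi-index $\gamma$. *)

theory Defs
  imports "HOL-Analysis.Analysis"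
begin

definition Psi :: "real \<Rightarrow> real ^ 'n::finite \<Rightarrow> real" where
  "Psi N0 x = (1 + (norm x)\<^sup>2) powr (- N0 / 2)"

definition wtilde :: "(real ^ 'n::finite \<Rightarrow> real) \<Rightarrow> real ^ 'n \<Rightarrow> ennreal" where
  "wtilde w x = (SUP y\<in>cball x 1. ennreal (w y))"

definition Aw :: "real \<Rightarrow> (real ^ 'n::finite \<Rightarrow> real) \<Rightarrow> real ^ 'n \<Rightarrow> ennreal" where
  "Aw N0 w x = (\<integral>\<^sup>+ y. ennreal (Psi N0 (x - y)) * wtilde w y \<partial>lborel)"

definition partial :: "'n::finite \<Rightarrow> (real ^ 'n \<Rightarrow> real) \<Rightarrow> real ^ 'n \<Rightarrow> real" where
  "partial i f x = deriv (\<lambda>t. f (x + t *\<^sub>R axis i 1)) 0"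

fun partials :: "'n::finite list \<Rightarrow> (real ^ 'n \<Rightarrow> real) \<Rightarrow> real ^ 'n \<Rightarrow> real" where
  "partials [] f = f"
| "partials (i # is) f = partial i (partials is f)"

definition Dmulti :: "('n::finite \<Rightarrow> nat) \<Rightarrow> (real ^ 'n \<Rightarrow> real) \<Rightarrow> real ^ 'n \<Rightarrow> real" where
  "Dmulti \<gamma> f = partials (SOME l. \<forall>i. count_list l i = \<gamma> i) f"

end

theory Submission
  imports Defs
begin

lemma pos1: "1 + (norm (z::'a::real_normed_vector))\<^sup>2 > 0"
  by (simp add: add_pos_nonneg)

lemma Psi_pos: "Psi N0 z > 0"
  unfolding Psi_def using pos1[of z] by simp

lemma Psi_cont: "continuous_on UNIV (Psi N0 :: real^'n::finite \<Rightarrow> real)"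
  unfolding Psi_def by (intro continuous_intros ballI) (metis pos1 less_irrefl)

lemma Psi_meas[measurable]: "(Psi N0 :: real^'n::finite \<Rightarrow> real) \<in> borel_measurable borel"
  using Psi_cont by (rule borel_measurable_continuous_onI)

lemma ennreal_inv_cancel: "a > 0 \<Longrightarrow> ennreal a * (b * ennreal (1/a)) = b"
proof -
  assume a: "a > 0"
  have "ennreal a * ennreal (1/a) = 1" using a by (simp add: ennreal_mult[symmetric])
  then show ?thesis by (metis mult.commute mult.left_commute mult_1_right)
qed

lemma minorant:
  fixes g :: "real^'n::finite \<Rightarrow> ennreal"
  assumes fin: "(\<integral>\<^sup>+y. ennreal (Psi N0 (0 - y)) * g y \<partial>lborel) < \<infinity>"
  shows "\<exists>H. H \<in> borel_measurable borel \<and>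
     (\<forall>x. (\<integral>\<^sup>+y. ennreal (Psi N0 (x - y)) * g y \<partial>lborel) = (\<integral>\<^sup>+y. ennreal (Psi N0 (x - y)) * H y \<partial>lborel))"
proof -
  define f0 where "f0 = (\<lambda>y. ennreal (Psi N0 (0 - y)) * g y)"
  define S where "S = {s. simple_function lborel s \<and> s \<le> f0}"
  have Sne: "S \<noteq> {}" unfolding S_def by (auto intro!: exI[of _ "\<lambda>_. 0"] simp: le_fun_def)
  have A0: "integral\<^sup>N lborel f0 = (SUP s\<in>S. integral\<^sup>S lborel s)"
    unfolding S_def by (rule nn_integral_def)
  obtain sq :: "nat \<Rightarrow> ennreal" where sq0: "range sq \<subseteq> integral\<^sup>S lborel ` S \<and> Sup (integral\<^sup>S lborel ` S) = Sup (range sq)"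
    using ennreal_SUP_countable_SUP[OF Sne, of "integral\<^sup>S lborel"] by blast
  note sq = sq0[THEN conjunct1] sq0[THEN conjunct2]
  have sqin: "sq n \<in> integral\<^sup>S lborel ` S" for n using sq(1) by (simp add: image_subset_iff)
  have "\<forall>n. \<exists>s. s \<in> S \<and> integral\<^sup>S lborel s = sq n" using sqin by (metis imageE)
  then obtain s where s: "\<And>n. s n \<in> S" "\<And>n. integral\<^sup>S lborel (s n) = sq n" by metis
  have smeas[measurable]: "\<And>n. s n \<in> borel_measurable borel"
    using s(1) unfolding S_def by (metis (no_types, lifting) borel_measurable_simple_function mem_Collect_eq measurable_lborel2)
  have sle: "\<And>n y. s n y \<le> f0 y" using s(1) unfolding S_def le_fun_def by auto
  define H where "H = (\<lambda>y. (SUP n. s n y) * ennreal (1 / Psi N0 (0 - y)))"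
  have Hmeas[measurable]: "H \<in> borel_measurable borel" unfolding H_def by measurable
  have PH: "ennreal (Psi N0 (0 - y)) * H y = (SUP n. s n y)" for y
    unfolding H_def by (rule ennreal_inv_cancel[OF Psi_pos])
  have Hg: "H y \<le> g y" for y
  proof -
    have "(SUP n. s n y) \<le> ennreal (Psi N0 (0 - y)) * g y" using sle unfolding f0_def by (auto intro: SUP_least)
    then have "(SUP n. s n y) * ennreal (1 / Psi N0 (0 - y)) \<le> ennreal (Psi N0 (0 - y)) * g y * ennreal (1 / Psi N0 (0 - y))"
      by (rule mult_right_mono) simp
    also have "\<dots> = g y" using ennreal_inv_cancel[OF Psi_pos, of N0 "0-y" "g y"] by (simp add: mult_ac)
    finally show ?thesis unfolding H_def .
  qed
  have I0: "(\<integral>\<^sup>+y. ennreal (Psi N0 (0 - y)) * H y \<partial>lborel) = integral\<^sup>N lborel f0"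
  proof (rule antisym)
    show "(\<integral>\<^sup>+y. ennreal (Psi N0 (0 - y)) * H y \<partial>lborel) \<le> integral\<^sup>N lborel f0"
      unfolding f0_def by (intro nn_integral_mono mult_left_mono Hg) auto
    have "sq n \<le> (\<integral>\<^sup>+y. ennreal (Psi N0 (0 - y)) * H y \<partial>lborel)" for n
    proof -
      have "sq n = integral\<^sup>N lborel (s n)" using s(1)[of n] s(2)[of n] unfolding S_def
        by (simp add: nn_integral_eq_simple_integral)
      also have "\<dots> \<le> (\<integral>\<^sup>+y. ennreal (Psi N0 (0 - y)) * H y \<partial>lborel)"
        unfolding PH by (intro nn_integral_mono) (auto intro: SUP_upper)
      finally show ?thesis .
    qed
    then show "integral\<^sup>N lborel f0 \<le> (\<integral>\<^sup>+y. ennreal (Psi N0 (0 - y)) * H y \<partial>lborel)"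
      unfolding A0 sq(2) by (auto intro: SUP_least)
  qed
  have maxi: "AE y in lborel. t y \<le> H y" if tm[measurable]: "t \<in> borel_measurable borel" and tg: "\<And>y. t y \<le> g y" for t
  proof -
    define m where "m = (\<lambda>y. max (H y) (t y))"
    have mm[measurable]: "m \<in> borel_measurable borel" unfolding m_def by measurable
    define u where "u = (\<lambda>y. ennreal (Psi N0 (0 - y)) * H y)"
    define v where "v = (\<lambda>y. ennreal (Psi N0 (0 - y)) * m y)"
    have um[measurable]: "u \<in> borel_measurable borel" unfolding u_def by measurable
    have vm[measurable]: "v \<in> borel_measurable borel" unfolding v_def by measurable
    have uv: "u y \<le> v y" for y unfolding u_def v_def m_def by (intro mult_left_mono) auto
    have vf: "integral\<^sup>N lborel v \<le> integral\<^sup>N lborel f0"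
      unfolding v_def f0_def m_def using Hg tg by (intro nn_integral_mono mult_left_mono) auto
    have "integral\<^sup>N lborel v = integral\<^sup>N lborel u + (\<integral>\<^sup>+y. (v y - u y) \<partial>lborel)"
    proof -
      have "integral\<^sup>N lborel v = (\<integral>\<^sup>+y. u y + (v y - u y) \<partial>lborel)"
        using uv by (intro nn_integral_cong) (simp add: add_diff_inverse_ennreal)
      also have "\<dots> = integral\<^sup>N lborel u + (\<integral>\<^sup>+y. (v y - u y) \<partial>lborel)"
        by (intro nn_integral_add) auto
      finally show ?thesis .
    qed
    moreover have "integral\<^sup>N lborel u = integral\<^sup>N lborel f0" unfolding u_def using I0 by simp
    ultimately have "integral\<^sup>N lborel f0 + (\<integral>\<^sup>+y. (v y - u y) \<partial>lborel) \<le> integral\<^sup>N lborel f0 + 0"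
      using vf by simp
    then have "(\<integral>\<^sup>+y. (v y - u y) \<partial>lborel) \<le> 0"
      using fin unfolding f0_def ennreal_add_left_cancel_le by auto
    then have "(\<integral>\<^sup>+y. (v y - u y) \<partial>lborel) = 0" by simp
    then have "AE y in lborel. v y - u y = 0" by (subst (asm) nn_integral_0_iff_AE) auto
    then show ?thesis
    proof eventually_elim
      case (elim y)
      then have "v y \<le> u y" by (simp add: diff_eq_0_iff_ennreal)
      then have "v y * ennreal (1 / Psi N0 (0 - y)) \<le> u y * ennreal (1 / Psi N0 (0 - y))"
        by (rule mult_right_mono) simp
      then have "m y \<le> H y" unfolding u_def v_def
        using ennreal_inv_cancel[OF Psi_pos, of N0 "0-y" "m y"] ennreal_inv_cancel[OF Psi_pos, of N0 "0-y" "H y"]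
        by (simp add: mult_ac)
      then show ?case unfolding m_def by simp
    qed
  qed
  have "(\<integral>\<^sup>+y. ennreal (Psi N0 (x - y)) * g y \<partial>lborel) = (\<integral>\<^sup>+y. ennreal (Psi N0 (x - y)) * H y \<partial>lborel)" for x
  proof (rule antisym)
    show "(\<integral>\<^sup>+y. ennreal (Psi N0 (x - y)) * H y \<partial>lborel) \<le> (\<integral>\<^sup>+y. ennreal (Psi N0 (x - y)) * g y \<partial>lborel)"
      by (intro nn_integral_mono mult_left_mono Hg) auto
    have "(\<integral>\<^sup>+y. ennreal (Psi N0 (x - y)) * g y \<partial>lborel) =
      (SUP r\<in>{r. simple_function lborel r \<and> r \<le> (\<lambda>y. ennreal (Psi N0 (x - y)) * g y)}. integral\<^sup>S lborel r)"
      by (rule nn_integral_def)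
    also have "\<dots> \<le> (\<integral>\<^sup>+y. ennreal (Psi N0 (x - y)) * H y \<partial>lborel)"
    proof (rule SUP_least, safe)
      fix r assume r: "simple_function lborel r" "r \<le> (\<lambda>y. ennreal (Psi N0 (x - y)) * g y)"
      have rm[measurable]: "r \<in> borel_measurable borel" using r(1) borel_measurable_simple_function measurable_lborel2 by metis
      define t where "t = (\<lambda>y. r y * ennreal (1 / Psi N0 (x - y)))"
      have tm: "t \<in> borel_measurable borel" unfolding t_def by measurable
      have tg: "t y \<le> g y" for y
      proof -
        have "t y \<le> ennreal (Psi N0 (x - y)) * g y * ennreal (1 / Psi N0 (x - y))"
          unfolding t_def using r(2) by (intro mult_right_mono) (auto simp: le_fun_def)
        also have "\<dots> = g y" using ennreal_inv_cancel[OF Psi_pos, of N0 "x-y" "g y"] by (simp add: mult_ac)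
        finally show ?thesis .
      qed
      have "AE y in lborel. r y \<le> ennreal (Psi N0 (x - y)) * H y"
        using maxi[OF tm tg]
      proof eventually_elim
        case (elim y)
        have "r y = ennreal (Psi N0 (x - y)) * t y" unfolding t_def by (rule ennreal_inv_cancel[OF Psi_pos, symmetric])
        also have "\<dots> \<le> ennreal (Psi N0 (x - y)) * H y" using elim by (rule mult_left_mono) simp
        finally show ?case .
      qed
      then have "integral\<^sup>N lborel r \<le> (\<integral>\<^sup>+y. ennreal (Psi N0 (x - y)) * H y \<partial>lborel)"
        by (rule nn_integral_mono_AE)
      then show "integral\<^sup>S lborel r \<le> (\<integral>\<^sup>+y. ennreal (Psi N0 (x - y)) * H y \<partial>lborel)"
        using r(1) by (simp add: nn_integral_eq_simple_integral)
    qed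
    finally show "(\<integral>\<^sup>+y. ennreal (Psi N0 (x - y)) * g y \<partial>lborel) \<le> (\<integral>\<^sup>+y. ennreal (Psi N0 (x - y)) * H y \<partial>lborel)" .
  qed
  then show ?thesis using Hmeas by blast
qed

lemma realize:
  fixes g :: "real^'n::finite \<Rightarrow> ennreal"
  assumes fin: "\<And>x. (\<integral>\<^sup>+y. ennreal (Psi N0 (x - y)) * g y \<partial>lborel) < \<infinity>"
  shows "\<exists>h. h \<in> borel_measurable borel \<and> (\<forall>y. 0 \<le> h y) \<and>
     (\<forall>x. integrable lborel (\<lambda>y. Psi N0 (x - y) * h y)) \<and>
     (\<forall>x. (\<integral>\<^sup>+y. ennreal (Psi N0 (x - y)) * g y \<partial>lborel) = ennreal (\<integral>y. Psi N0 (x - y) * h y \<partial>lborel))"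
proof -
  obtain H where Hm[measurable]: "H \<in> borel_measurable borel" and
    HA: "\<And>x. (\<integral>\<^sup>+y. ennreal (Psi N0 (x - y)) * g y \<partial>lborel) = (\<integral>\<^sup>+y. ennreal (Psi N0 (x - y)) * H y \<partial>lborel)"
    using minorant[OF fin[of 0]] by blast
  have "AE y in lborel. ennreal (Psi N0 (0 - y)) * H y \<noteq> \<infinity>"
    using fin[of 0] unfolding HA by (intro nn_integral_PInf_AE) auto
  then have AEH: "AE y in lborel. H y \<noteq> \<infinity>"
  proof eventually_elim
    case (elim y)
    have "Psi N0 (0 - y) > 0" by (rule Psi_pos)
    then show ?case using elim by (auto simp: ennreal_mult_eq_top_iff)
  qed
  define h where "h = (\<lambda>y. enn2real (H y))"
  have hm[measurable]: "h \<in> borel_measurable borel" unfolding h_def by measurable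
  have h0: "0 \<le> h y" for y unfolding h_def by simp
  have eqn: "(\<integral>\<^sup>+y. ennreal (Psi N0 (x - y) * h y) \<partial>lborel) = (\<integral>\<^sup>+y. ennreal (Psi N0 (x - y)) * H y \<partial>lborel)" for x
    using AEH
  proof (intro nn_integral_cong_AE, eventually_elim)
    case (elim y)
    then show ?case unfolding h_def using Psi_pos[of N0 "x-y"]
      by (simp add: ennreal_mult ennreal_enn2real_if)
  qed
  have int: "integrable lborel (\<lambda>y. Psi N0 (x - y) * h y)" for x
    using fin[of x] unfolding HA eqn[symmetric]
    by (intro integrableI_nonneg) (auto intro!: mult_nonneg_nonneg less_imp_le[OF Psi_pos] h0)
  have "(\<integral>\<^sup>+y. ennreal (Psi N0 (x - y)) * g y \<partial>lborel) = ennreal (\<integral>y. Psi N0 (x - y) * h y \<partial>lborel)" for x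
    unfolding HA eqn[symmetric]
    by (rule nn_integral_eq_integral[OF int]) (auto intro!: mult_nonneg_nonneg less_imp_le[OF Psi_pos] h0)
  then show ?thesis using hm h0 int by blast
qed

lemma peetre_base:
  fixes z s :: "'a::real_normed_vector"
  shows "1 + (norm z)\<^sup>2 \<le> 2 * (1 + (norm (z + s))\<^sup>2) * (1 + (norm s)\<^sup>2)"
proof -
  have t: "norm z \<le> norm (z + s) + norm s"
    using norm_triangle_ineq4[of "z + s" s] by simp
  have "(norm z)\<^sup>2 \<le> (norm (z + s) + norm s)\<^sup>2"
    using t by (intro power_mono) auto
  also have "\<dots> \<le> 2 * (norm (z + s))\<^sup>2 + 2 * (norm s)\<^sup>2"
    by (smt (verit) sum_squares_bound power2_sum)
  finally have "(norm z)\<^sup>2 \<le> 2 * (norm (z + s))\<^sup>2 + 2 * (norm s)\<^sup>2" .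
  moreover have "0 \<le> (norm (z + s))\<^sup>2 * (norm s)\<^sup>2" by simp
  moreover have "2 * (1 + (norm (z + s))\<^sup>2) * (1 + (norm s)\<^sup>2) = 2 + 2 * (norm (z + s))\<^sup>2 + 2 * (norm s)\<^sup>2 + 2 * ((norm (z + s))\<^sup>2 * (norm s)\<^sup>2)"
    by (simp add: algebra_simps)
  ultimately show ?thesis by linarith
qed

lemma peetre:
  fixes z s :: "real^'n::finite"
  assumes "N0 \<ge> 0"
  shows "Psi N0 (z + s) \<le> (2 * (1 + (norm s)\<^sup>2)) powr (N0 / 2) * Psi N0 z"
proof -
  have p1: "0 < 1 + (norm (z+s))\<^sup>2" "0 < 1 + (norm s)\<^sup>2" "0 < 1 + (norm z)\<^sup>2" by (rule pos1)+
  have "(1 + (norm z)\<^sup>2) / (2 * (1 + (norm s)\<^sup>2)) \<le> 1 + (norm (z+s))\<^sup>2"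
  proof -
    have "1 + (norm z)\<^sup>2 \<le> (1 + (norm (z+s))\<^sup>2) * (2 * (1 + (norm s)\<^sup>2))"
      using peetre_base[of z s] by (metis mult.commute mult.assoc)
    then show ?thesis using p1 by (simp add: pos_divide_le_eq)
  qed
  then have "(1 + (norm (z+s))\<^sup>2) powr (- N0 / 2) \<le> ((1 + (norm z)\<^sup>2) / (2 * (1 + (norm s)\<^sup>2))) powr (- N0 / 2)"
    using assms p1 by (intro powr_mono2') auto
  also have "\<dots> = (2 * (1 + (norm s)\<^sup>2)) powr (N0 / 2) * (1 + (norm z)\<^sup>2) powr (- N0 / 2)"
    using p1 by (simp add: powr_divide powr_minus divide_simps)
  finally show ?thesis unfolding Psi_def by simp
qed

lemma mvt_sym:
  fixes f f' :: "real \<Rightarrow> real"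
  assumes der: "\<And>s. (f has_real_derivative f' s) (at s)" and t: "t \<noteq> 0"
  shows "\<exists>\<xi>. \<bar>\<xi>\<bar> \<le> \<bar>t\<bar> \<and> f t - f 0 = t * f' \<xi>"
proof (cases "t > 0")
  case True
  from MVT2[OF True der] obtain z where "0 < z" "z < t" "f t - f 0 = (t - 0) * f' z" by blast
  then show ?thesis by (intro exI[of _ z]) auto
next
  case False
  then have "t < 0" using t by simp
  from MVT2[OF this der] obtain z where "t < z" "z < 0" "f 0 - f t = (0 - t) * f' z" by blast
  then show ?thesis by (intro exI[of _ z]) auto
qed

lemma DI:
  fixes \<phi> \<phi>' h :: "real^'n::finite \<Rightarrow> real" and e x :: "real^'n"
  assumes N0: "N0 \<ge> 0" and e: "norm e = 1"
    and hm[measurable]: "h \<in> borel_measurable borel" and h0: "\<And>y. 0 \<le> h y"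
    and int: "\<And>x. integrable lborel (\<lambda>y. Psi N0 (x - y) * h y)"
    and \<phi>m[measurable]: "\<phi> \<in> borel_measurable borel" and \<phi>'m[measurable]: "\<phi>' \<in> borel_measurable borel"
    and bd: "\<And>z. \<bar>\<phi> z\<bar> \<le> C * Psi N0 z"
    and bd': "\<And>z. \<bar>\<phi>' z\<bar> \<le> C' * Psi N0 z"
    and der: "\<And>z. ((\<lambda>t. \<phi> (z + t *\<^sub>R e)) has_real_derivative \<phi>' z) (at 0)"
  shows "((\<lambda>t. \<integral>y. \<phi> (x + t *\<^sub>R e - y) * h y \<partial>lborel) has_real_derivative
           (\<integral>y. \<phi>' (x - y) * h y \<partial>lborel)) (at 0)"
proof -
  define F where "F = (\<lambda>t. \<integral>y. \<phi> (x + t *\<^sub>R e - y) * h y \<partial>lborel)"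
  define D where "D = (\<integral>y. \<phi>' (x - y) * h y \<partial>lborel)"
  have intphi: "integrable lborel (\<lambda>y. \<phi> (u - y) * h y)" for u
  proof (rule Bochner_Integration.integrable_bound)
    show "integrable lborel (\<lambda>y. \<bar>C\<bar> * (Psi N0 (u - y) * h y))" using int[of u] by simp
    show "(\<lambda>y. \<phi> (u - y) * h y) \<in> borel_measurable lborel" by measurable
    show "AE y in lborel. norm (\<phi> (u - y) * h y) \<le> norm (\<bar>C\<bar> * (Psi N0 (u - y) * h y))"
    proof (intro AE_I2)
      fix y
      have "\<bar>\<phi> (u - y)\<bar> * h y \<le> (C * Psi N0 (u - y)) * h y" using bd h0 by (intro mult_right_mono) auto
      also have "\<dots> \<le> \<bar>C\<bar> * (Psi N0 (u - y) * h y)" using h0[of y] Psi_pos[of N0 "u-y"]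
        by (simp add: mult.assoc mult_right_mono)
      finally show "norm (\<phi> (u - y) * h y) \<le> norm (\<bar>C\<bar> * (Psi N0 (u - y) * h y))"
        using h0[of y] Psi_pos[of N0 "u-y"] by (simp add: abs_mult)
    qed
  qed
  have intw: "integrable lborel (\<lambda>y. (\<bar>C'\<bar> * 2 powr N0) * (Psi N0 (x - y) * h y))"
    using int[of x] by simp
  have quot: "\<bar>(\<phi> (z + t *\<^sub>R e) - \<phi> z) / t\<bar> \<le> (\<bar>C'\<bar> * 2 powr N0) * Psi N0 z"
    if t: "t \<noteq> 0" "\<bar>t\<bar> < 1" for z t
  proof -
    have d: "((\<lambda>s. \<phi> (z + s *\<^sub>R e)) has_real_derivative \<phi>' (z + s *\<^sub>R e)) (at s)" for s
    proof -
      have "((\<lambda>u. \<phi> (z + s *\<^sub>R e + u *\<^sub>R e)) has_real_derivative \<phi>' (z + s *\<^sub>R e)) (at 0)" by (rule der)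
      then have "((\<lambda>u. \<phi> (z + (u + s) *\<^sub>R e)) has_real_derivative \<phi>' (z + s *\<^sub>R e)) (at 0)"
        by (simp add: scaleR_add_left algebra_simps)
      then show ?thesis using DERIV_shift[of "\<lambda>s. \<phi> (z + s *\<^sub>R e)" "\<phi>' (z + s *\<^sub>R e)" 0 s] by simp
    qed
    obtain \<xi> where \<xi>: "\<bar>\<xi>\<bar> \<le> \<bar>t\<bar>" "\<phi> (z + t *\<^sub>R e) - \<phi> (z + 0 *\<^sub>R e) = t * \<phi>' (z + \<xi> *\<^sub>R e)"
      using mvt_sym[of "\<lambda>s. \<phi> (z + s *\<^sub>R e)", OF d t(1)] by blast
    have "\<bar>(\<phi> (z + t *\<^sub>R e) - \<phi> z) / t\<bar> = \<bar>\<phi>' (z + \<xi> *\<^sub>R e)\<bar>" using \<xi> t by simp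
    also have "\<dots> \<le> \<bar>C'\<bar> * Psi N0 (z + \<xi> *\<^sub>R e)" using bd'[of "z + \<xi> *\<^sub>R e"] Psi_pos[of N0 "z + \<xi> *\<^sub>R e"]
      by (smt (verit) mult_right_mono)
    also have "\<dots> \<le> \<bar>C'\<bar> * ((2 * (1 + (norm (\<xi> *\<^sub>R e))\<^sup>2)) powr (N0 / 2) * Psi N0 z)"
      by (intro mult_left_mono peetre N0) auto
    also have "\<dots> \<le> \<bar>C'\<bar> * ((2 * 2) powr (N0 / 2) * Psi N0 z)"
    proof -
      have "(norm (\<xi> *\<^sub>R e))\<^sup>2 \<le> 1" using \<xi> t e by (simp add: abs_square_le_1)
      then have "(2 * (1 + (norm (\<xi> *\<^sub>R e))\<^sup>2)) powr (N0 / 2) \<le> (2 * 2) powr (N0 / 2)"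
        using N0 by (intro powr_mono2) auto
      then show ?thesis using Psi_pos[of N0 z] by (intro mult_left_mono mult_right_mono) auto
    qed
    also have "(2 * 2 :: real) powr (N0 / 2) = 2 powr N0"
      by (simp add: powr_mult[symmetric] powr_add[symmetric])
    finally show ?thesis by (simp add: mult.assoc)
  qed
  have lim: "((\<lambda>t. (F (0 + t) - F 0) / t) \<longlongrightarrow> D) (at 0 within {-1<..<1})"
  proof (subst tendsto_at_iff_sequentially, intro allI impI)
    fix X :: "nat \<Rightarrow> real" assume X: "\<forall>i. X i \<in> {-1<..<1} - {0}" "X \<longlonglongrightarrow> 0"
    have eq: "(F (0 + X i) - F 0) / X i = (\<integral>y. (\<phi> ((x - y) + X i *\<^sub>R e) - \<phi> (x - y)) / X i * h y \<partial>lborel)" for i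
    proof -
      have "F (0 + X i) - F 0 = (\<integral>y. \<phi> (x + X i *\<^sub>R e - y) * h y - \<phi> (x - y) * h y \<partial>lborel)"
        unfolding F_def using intphi[of "x + X i *\<^sub>R e"] intphi[of x] by (simp add: Bochner_Integration.integral_diff)
      then have "(F (0 + X i) - F 0) / X i = (\<integral>y. (\<phi> (x + X i *\<^sub>R e - y) * h y - \<phi> (x - y) * h y) / X i \<partial>lborel)"
        by simp
      also have "\<dots> = (\<integral>y. (\<phi> ((x - y) + X i *\<^sub>R e) - \<phi> (x - y)) / X i * h y \<partial>lborel)"
        by (intro Bochner_Integration.integral_cong) (auto simp: algebra_simps diff_divide_distrib)
      finally show ?thesis .
    qed
    have "(\<lambda>i. \<integral>y. (\<phi> ((x - y) + X i *\<^sub>R e) - \<phi> (x - y)) / X i * h y \<partial>lborel) \<longlonglongrightarrow> D"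
      unfolding D_def
    proof (rule integral_dominated_convergence[where w="\<lambda>y. (\<bar>C'\<bar> * 2 powr N0) * (Psi N0 (x - y) * h y)"])
      show "(\<lambda>y. \<phi>' (x - y) * h y) \<in> borel_measurable lborel" by measurable
      show "(\<lambda>y. (\<phi> ((x - y) + X i *\<^sub>R e) - \<phi> (x - y)) / X i * h y) \<in> borel_measurable lborel" for i
        by measurable
      show "integrable lborel (\<lambda>y. (\<bar>C'\<bar> * 2 powr N0) * (Psi N0 (x - y) * h y))" by (rule intw)
      show "AE y in lborel. (\<lambda>i. (\<phi> ((x - y) + X i *\<^sub>R e) - \<phi> (x - y)) / X i * h y) \<longlonglongrightarrow> \<phi>' (x - y) * h y"
      proof (intro AE_I2 tendsto_mult tendsto_const)
        fix y
        have "((\<lambda>t. (\<phi> ((x - y) + (0 + t) *\<^sub>R e) - \<phi> ((x - y) + 0 *\<^sub>R e)) / t) \<longlongrightarrow> \<phi>' (x - y)) (at 0)"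
          using der[of "x - y"] unfolding DERIV_def .
        then have L: "((\<lambda>t. (\<phi> ((x - y) + t *\<^sub>R e) - \<phi> (x - y)) / t) \<longlongrightarrow> \<phi>' (x - y)) (at 0)" by simp
        have "filterlim X (at 0) sequentially"
          using X by (auto simp: filterlim_at)
        from filterlim_compose[OF L this]
        show "(\<lambda>i. (\<phi> ((x - y) + X i *\<^sub>R e) - \<phi> (x - y)) / X i) \<longlonglongrightarrow> \<phi>' (x - y)" by simp
      qed
      show "AE y in lborel. norm ((\<phi> ((x - y) + X i *\<^sub>R e) - \<phi> (x - y)) / X i * h y) \<le> (\<bar>C'\<bar> * 2 powr N0) * (Psi N0 (x - y) * h y)" for i
      proof (intro AE_I2)
        fix y
        have "X i \<noteq> 0" "\<bar>X i\<bar> < 1" using X(1)[rule_format, of i] by auto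
        from quot[OF this, of "x - y"]
        have "\<bar>(\<phi> ((x - y) + X i *\<^sub>R e) - \<phi> (x - y)) / X i\<bar> * h y \<le> (\<bar>C'\<bar> * 2 powr N0) * Psi N0 (x - y) * h y"
          using h0[of y] by (intro mult_right_mono) auto
        then show "norm ((\<phi> ((x - y) + X i *\<^sub>R e) - \<phi> (x - y)) / X i * h y) \<le> (\<bar>C'\<bar> * 2 powr N0) * (Psi N0 (x - y) * h y)"
          using h0[of y] by (simp add: abs_mult mult.assoc)
      qed
    qed
    then show "((\<lambda>t. (F (0 + t) - F 0) / t) \<circ> X) \<longlonglongrightarrow> D" unfolding comp_def eq .
  qed
  then have "((\<lambda>t. (F (0 + t) - F 0) / t) \<longlongrightarrow> D) (at 0)"
    by (simp add: at_within_open[of 0 "{-1<..<1}"])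
  then show ?thesis unfolding DERIV_def F_def D_def .
qed

inductive ppoly :: "nat \<Rightarrow> (real^'n::finite \<Rightarrow> real) \<Rightarrow> bool" where
  pconst: "ppoly 0 (\<lambda>z. c)"
| pcoord: "ppoly 1 (\<lambda>z. z $ j)"
| pmult: "ppoly a p \<Longrightarrow> ppoly b q \<Longrightarrow> ppoly (a + b) (\<lambda>z. p z * q z)"
| padd: "ppoly a p \<Longrightarrow> ppoly a q \<Longrightarrow> ppoly a (\<lambda>z. p z + q z)"
| plift: "ppoly a p \<Longrightarrow> ppoly (Suc a) p"

lemma ppoly_le: assumes "ppoly a p" "a \<le> b" shows "ppoly b p"
  using assms(2) by (induction b rule: dec_induct) (auto intro: plift assms(1))

lemma ppoly_cont: "ppoly a p \<Longrightarrow> continuous_on UNIV p"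
  by (induction rule: ppoly.induct) (auto intro!: continuous_intros)

lemma ppoly_bound: "ppoly a p \<Longrightarrow> \<exists>C\<ge>0. \<forall>z. \<bar>p z\<bar> \<le> C * (1 + norm z) ^ a"
proof (induction rule: ppoly.induct)
  case (pconst c)
  then show ?case by (intro exI[of _ "\<bar>c\<bar>"]) auto
next
  case (pcoord j)
  show ?case
  proof (intro exI[of _ 1] conjI allI)
    fix z :: "real^'a" show "\<bar>z $ j\<bar> \<le> 1 * (1 + norm z) ^ 1" using component_le_norm_cart[of z j] by simp
  qed simp
next
  case (pmult a p b q)
  then obtain C1 C2 where C: "C1 \<ge> 0" "C2 \<ge> 0" "\<And>z. \<bar>p z\<bar> \<le> C1 * (1 + norm z) ^ a" "\<And>z. \<bar>q z\<bar> \<le> C2 * (1 + norm z) ^ b"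
    by blast
  show ?case
  proof (intro exI[of _ "C1 * C2"] conjI allI)
    fix z :: "real^'a"
    have "\<bar>p z * q z\<bar> \<le> (C1 * (1 + norm z) ^ a) * (C2 * (1 + norm z) ^ b)"
      unfolding abs_mult using C by (intro mult_mono) auto
    then show "\<bar>p z * q z\<bar> \<le> C1 * C2 * (1 + norm z) ^ (a + b)" by (simp add: power_add mult_ac)
  qed (use C in auto)
next
  case (padd a p q)
  then obtain C1 C2 where C: "C1 \<ge> 0" "C2 \<ge> 0" "\<And>z. \<bar>p z\<bar> \<le> C1 * (1 + norm z) ^ a" "\<And>z. \<bar>q z\<bar> \<le> C2 * (1 + norm z) ^ a"
    by blast
  show ?case
  proof (intro exI[of _ "C1 + C2"] conjI allI)
    fix z :: "real^'a"
    show "\<bar>p z + q z\<bar> \<le> (C1 + C2) * (1 + norm z) ^ a" using C(3,4)[of z] by (simp add: algebra_simps abs_triangle_ineq[THEN order_trans])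
  qed (use C in auto)
next
  case (plift a p)
  then obtain C where C: "C \<ge> 0" "\<And>z. \<bar>p z\<bar> \<le> C * (1 + norm z) ^ a" by blast
  show ?case
  proof (intro exI[of _ C] conjI allI)
    fix z :: "real^'a"
    have "(1 + norm z) ^ a \<le> (1 + norm z) ^ Suc a" by (intro power_increasing) auto
    then show "\<bar>p z\<bar> \<le> C * (1 + norm z) ^ Suc a" using C(2)[of z] C(1) by (smt (verit) mult_left_mono)
  qed (use C in auto)
qed

lemma ppoly_deriv: "ppoly a p \<Longrightarrow> \<exists>q. ppoly a q \<and> (\<forall>z. ((\<lambda>t. p (z + t *\<^sub>R e)) has_real_derivative q z) (at 0))"
proof (induction rule: ppoly.induct)
  case (pconst c)
  then show ?case by (intro exI[of _ "\<lambda>z. 0"]) (auto intro: ppoly.pconst)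
next
  case (pcoord j)
  show ?case
  proof (intro exI[of _ "\<lambda>z. e $ j"] conjI allI)
    show "ppoly 1 (\<lambda>z. e $ j)" using plift[OF ppoly.pconst[of "e $ j"]] by simp
    fix z :: "real^'a"
    show "((\<lambda>t. (z + t *\<^sub>R e) $ j) has_real_derivative e $ j) (at 0)"
      by (auto intro!: derivative_eq_intros)
  qed
next
  case (pmult a p b q)
  then obtain p' q' where P: "ppoly a p'" "\<And>z. ((\<lambda>t. p (z + t *\<^sub>R e)) has_real_derivative p' z) (at 0)"
    and Q: "ppoly b q'" "\<And>z. ((\<lambda>t. q (z + t *\<^sub>R e)) has_real_derivative q' z) (at 0)" by blast
  show ?case
  proof (intro exI[of _ "\<lambda>z. p' z * q z + p z * q' z"] conjI allI)
    show "ppoly (a + b) (\<lambda>z. p' z * q z + p z * q' z)"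
      by (intro padd ppoly.pmult P Q pmult.hyps)
    fix z :: "real^'a"
    show "((\<lambda>t. p (z + t *\<^sub>R e) * q (z + t *\<^sub>R e)) has_real_derivative p' z * q z + p z * q' z) (at 0)"
      using DERIV_mult[OF P(2)[of z] Q(2)[of z]] by (simp add: mult.commute)
  qed
next
  case (padd a p q)
  then obtain p' q' where P: "ppoly a p'" "\<And>z. ((\<lambda>t. p (z + t *\<^sub>R e)) has_real_derivative p' z) (at 0)"
    and Q: "ppoly a q'" "\<And>z. ((\<lambda>t. q (z + t *\<^sub>R e)) has_real_derivative q' z) (at 0)" by blast
  show ?case
  proof (intro exI[of _ "\<lambda>z. p' z + q' z"] conjI allI)
    show "ppoly a (\<lambda>z. p' z + q' z)" by (intro ppoly.padd P Q)
    fix z :: "real^'a"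
    show "((\<lambda>t. p (z + t *\<^sub>R e) + q (z + t *\<^sub>R e)) has_real_derivative p' z + q' z) (at 0)"
      using DERIV_add[OF P(2)[of z] Q(2)[of z]] by simp
  qed
next
  case (plift a p)
  then show ?case by (blast intro: ppoly.plift)
qed

lemma ppoly_sum: "finite S \<Longrightarrow> (\<And>j. j \<in> S \<Longrightarrow> ppoly a (f j)) \<Longrightarrow> ppoly a (\<lambda>z. \<Sum>j\<in>S. f j z)"
proof (induction S rule: finite_induct)
  case empty
  then show ?case using ppoly_le[OF pconst[of 0], of a] by simp
next
  case (insert x F)
  then show ?case by (simp add: padd)
qed

lemma ppoly_normsq: "ppoly 2 (\<lambda>z::real^'n::finite. 1 + (norm z)\<^sup>2)"
proof -
  have "ppoly 2 (\<lambda>z::real^'n. \<Sum>j\<in>UNIV. z $ j * z $ j)"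
    using pmult[OF pcoord pcoord] by (intro ppoly_sum) (auto simp: numeral_2_eq_2)
  then have "ppoly 2 (\<lambda>z::real^'n. 1 + (\<Sum>j\<in>UNIV. z $ j * z $ j))"
    by (intro padd ppoly_le[OF pconst]) auto
  then show ?thesis by (simp add: power2_norm_eq_inner inner_vec_def)
qed

lemma ppoly_inner: "ppoly 1 (\<lambda>z::real^'n::finite. inner z e)"
proof -
  have "ppoly 1 (\<lambda>z::real^'n. \<Sum>j\<in>UNIV. z $ j * e $ j)"
    using pmult[OF pcoord pconst] by (intro ppoly_sum) auto
  then show ?thesis by (simp add: inner_vec_def)
qed

definition gs :: "real \<Rightarrow> (real^'n::finite \<Rightarrow> real) \<Rightarrow> bool" where
  "gs N0 \<phi> \<longleftrightarrow> (\<exists>k p. ppoly (2 * k) p \<and> \<phi> = (\<lambda>z. p z * (1 + (norm z)\<^sup>2) powr (- N0 / 2 - real k)))"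

lemma gs_Psi: "gs N0 (Psi N0)"
  unfolding gs_def Psi_def by (intro exI[of _ 0] exI[of _ "\<lambda>z. 1"]) (auto intro: pconst)

lemma gs_meas: "gs N0 \<phi> \<Longrightarrow> \<phi> \<in> borel_measurable borel"
  unfolding gs_def
proof (elim exE conjE)
  fix k p assume p: "ppoly (2 * k) (p :: real^'a \<Rightarrow> real)" and \<phi>: "\<phi> = (\<lambda>z. p z * (1 + (norm z)\<^sup>2) powr (- N0 / 2 - real k))"
  have "continuous_on UNIV \<phi>" unfolding \<phi> using ppoly_cont[OF p]
    by (intro continuous_intros ballI) (auto, metis pos1 less_irrefl)
  then show "\<phi> \<in> borel_measurable borel" by (rule borel_measurable_continuous_onI)
qed

lemma sq_le: "(1 + r)\<^sup>2 \<le> 2 * (1 + r\<^sup>2)" for r :: real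
proof -
  have "0 \<le> (r - 1)\<^sup>2" by simp
  then show ?thesis by (simp add: power2_eq_square algebra_simps)
qed

lemma gs_bound: "gs N0 \<phi> \<Longrightarrow> \<exists>C. \<forall>z. \<bar>\<phi> z\<bar> \<le> C * Psi N0 z"
  unfolding gs_def
proof (elim exE conjE)
  fix k p assume p: "ppoly (2 * k) (p :: real^'a \<Rightarrow> real)" and \<phi>: "\<phi> = (\<lambda>z. p z * (1 + (norm z)\<^sup>2) powr (- N0 / 2 - real k))"
  obtain C where C: "C \<ge> 0" "\<And>z. \<bar>p z\<bar> \<le> C * (1 + norm z) ^ (2 * k)" using ppoly_bound[OF p] by blast
  show "\<exists>C. \<forall>z. \<bar>\<phi> z\<bar> \<le> C * Psi N0 z"
  proof (intro exI[of _ "C * 2 ^ k"] allI)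
    fix z :: "real^'a"
    define Q where "Q = 1 + (norm z)\<^sup>2"
    have Q: "Q > 0" unfolding Q_def by (rule pos1)
    have "(1 + norm z) ^ (2 * k) = ((1 + norm z)\<^sup>2) ^ k" by (simp add: power_mult)
    also have "\<dots> \<le> (2 * Q) ^ k" unfolding Q_def by (intro power_mono sq_le) auto
    finally have b: "\<bar>p z\<bar> \<le> C * (2 * Q) ^ k" using C by (smt (verit) mult_left_mono)
    have "\<bar>\<phi> z\<bar> = \<bar>p z\<bar> * Q powr (- N0 / 2 - real k)" unfolding \<phi> Q_def by (simp add: abs_mult)
    also have "\<dots> \<le> C * (2 * Q) ^ k * Q powr (- N0 / 2 - real k)" using b by (intro mult_right_mono) auto
    also have "\<dots> = C * 2 ^ k * (Q powr real k * Q powr (- N0 / 2 - real k))"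
      using Q by (simp add: power_mult_distrib powr_realpow mult_ac)
    also have "\<dots> = C * 2 ^ k * Psi N0 z" unfolding Psi_def Q_def by (simp add: powr_add[symmetric])
    finally show "\<bar>\<phi> z\<bar> \<le> C * 2 ^ k * Psi N0 z" .
  qed
qed

lemma normsq_deriv: "((\<lambda>t. 1 + (norm (z + t *\<^sub>R e))\<^sup>2) has_real_derivative 2 * inner z e) (at 0)"
  for z e :: "'a::real_inner"
proof -
  have eq: "(\<lambda>t. 1 + (norm (z + t *\<^sub>R e))\<^sup>2) = (\<lambda>t. 1 + inner z z + 2 * t * inner z e + t\<^sup>2 * inner e e)"
    by (simp add: power2_norm_eq_inner inner_add_left inner_add_right inner_commute)
       (simp add: algebra_simps power2_eq_square)
  show ?thesis unfolding eq by (auto intro!: derivative_eq_intros)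
qed

lemma gs_deriv: "gs N0 \<phi> \<Longrightarrow> \<exists>\<phi>'. gs N0 \<phi>' \<and> (\<forall>z. ((\<lambda>t. \<phi> (z + t *\<^sub>R e)) has_real_derivative \<phi>' z) (at 0))"
  unfolding gs_def
proof (elim exE conjE)
  fix k p assume p: "ppoly (2 * k) (p :: real^'a \<Rightarrow> real)" and \<phi>: "\<phi> = (\<lambda>z. p z * (1 + (norm z)\<^sup>2) powr (- N0 / 2 - real k))"
  obtain q where q: "ppoly (2 * k) q" "\<And>z. ((\<lambda>t. p (z + t *\<^sub>R e)) has_real_derivative q z) (at 0)"
    using ppoly_deriv[OF p, of e] by blast
  define a where "a = N0 / 2 + real k"
  define p' where "p' = (\<lambda>z. q z * (1 + (norm z)\<^sup>2) + ((- 2 * a) * inner z e) * p z)"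
  have p': "ppoly (2 * Suc k) p'"
  proof -
    have 1: "ppoly (2 * k + 2) (\<lambda>z. q z * (1 + (norm z)\<^sup>2))" by (rule pmult[OF q(1) ppoly_normsq])
    have "ppoly ((0 + 1) + 2 * k) (\<lambda>z. ((- 2 * a) * inner z e) * p z)"
      by (rule pmult[OF pmult[OF pconst ppoly_inner] p])
    then have 2: "ppoly (2 * k + 2) (\<lambda>z. ((- 2 * a) * inner z e) * p z)" by (rule ppoly_le) auto
    show ?thesis unfolding p'_def using padd[OF 1 2] by (simp add: algebra_simps)
  qed
  show "\<exists>\<phi>'. (\<exists>k p. ppoly (2 * k) p \<and> \<phi>' = (\<lambda>z. p z * (1 + (norm z)\<^sup>2) powr (- N0 / 2 - real k))) \<and>
          (\<forall>z. ((\<lambda>t. \<phi> (z + t *\<^sub>R e)) has_real_derivative \<phi>' z) (at 0))"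
  proof (intro exI conjI allI)
    show "ppoly (2 * Suc k) p'" by (rule p')
    fix z :: "real^'a"
    define Q where "Q = 1 + (norm z)\<^sup>2"
    have Q: "Q > 0" unfolding Q_def by (rule pos1)
    have d1: "((\<lambda>t. (1 + (norm (z + t *\<^sub>R e))\<^sup>2) powr (- a)) has_real_derivative
               (- a) * (1 + (norm (z + 0 *\<^sub>R e))\<^sup>2) powr (- a - of_nat 1) * (2 * inner z e)) (at 0)"
      by (rule DERIV_fun_powr[OF normsq_deriv]) (simp add: pos1)
    have \<phi>a: "\<phi> = (\<lambda>z. p z * (1 + (norm z)\<^sup>2) powr (- a))" unfolding \<phi> a_def by simp
    have d: "((\<lambda>t. \<phi> (z + t *\<^sub>R e)) has_real_derivative
               q z * Q powr (- a) + ((- a) * Q powr (- a - 1) * (2 * inner z e)) * p z) (at 0)"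
      unfolding \<phi>a using DERIV_mult[OF q(2)[of z] d1] unfolding Q_def by simp
    have "q z * Q powr (- a) + ((- a) * Q powr (- a - 1) * (2 * inner z e)) * p z = p' z * Q powr (- a - 1)"
    proof -
      have "Q * Q powr (- a - 1) = Q powr 1 * Q powr (- a - 1)" using Q by simp
      also have "\<dots> = Q powr (1 + (- a - 1))" by (rule powr_add[symmetric])
      finally have "Q powr (- a) = Q * Q powr (- a - 1)" by simp
      then show ?thesis unfolding p'_def Q_def by (simp add: algebra_simps)
    qed
    note E = this
    have d2: "((\<lambda>t. \<phi> (z + t *\<^sub>R e)) has_real_derivative p' z * Q powr (- a - 1)) (at 0)"
      using d unfolding E .
    have ex: "- a - 1 = - N0 / 2 - real (Suc k)" unfolding a_def by simp
    show "((\<lambda>t. \<phi> (z + t *\<^sub>R e)) has_real_derivative (\<lambda>z. p' z * (1 + (norm z)\<^sup>2) powr (- N0 / 2 - real (Suc k))) z) (at 0)"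
      using d2 unfolding ex Q_def by simp
  qed simp
qed

definition conv :: "(real^'n::finite \<Rightarrow> real) \<Rightarrow> (real^'n \<Rightarrow> real) \<Rightarrow> real^'n \<Rightarrow> real" where
  "conv h \<phi> x = (\<integral>y. \<phi> (x - y) * h y \<partial>lborel)"

definition goodh :: "real \<Rightarrow> (real^'n::finite \<Rightarrow> real) \<Rightarrow> bool" where
  "goodh N0 h \<longleftrightarrow> h \<in> borel_measurable borel \<and> (\<forall>y. 0 \<le> h y) \<and>
     (\<forall>x. integrable lborel (\<lambda>y. Psi N0 (x - y) * h y)) \<and> (\<forall>x. 0 < conv h (Psi N0) x)"

definition gC :: "real \<Rightarrow> (real^'n::finite \<Rightarrow> real) \<Rightarrow> real" where
  "gC N0 \<phi> = (SOME C. \<forall>z. \<bar>\<phi> z\<bar> \<le> C * Psi N0 z)"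

definition gd :: "real \<Rightarrow> real^'n::finite \<Rightarrow> (real^'n \<Rightarrow> real) \<Rightarrow> (real^'n \<Rightarrow> real)" where
  "gd N0 e \<phi> = (SOME \<phi>'. gs N0 \<phi>' \<and> (\<forall>z. ((\<lambda>t. \<phi> (z + t *\<^sub>R e)) has_real_derivative \<phi>' z) (at 0)))"

lemma gC: "gs N0 \<phi> \<Longrightarrow> \<bar>\<phi> z\<bar> \<le> gC N0 \<phi> * Psi N0 z"
  unfolding gC_def using someI_ex[OF gs_bound] by blast

lemma gC_nonneg: fixes \<phi> :: "real^'n::finite \<Rightarrow> real" shows "gs N0 \<phi> \<Longrightarrow> 0 \<le> gC N0 \<phi>"
proof -
  assume g: "gs N0 \<phi>"
  have "0 \<le> gC N0 \<phi> * Psi N0 (0::real^'n)" by (rule order_trans[OF abs_ge_zero gC[OF g]])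
  then show ?thesis using Psi_pos[of N0 "0::real^'n"] by (simp add: zero_le_mult_iff)
qed

lemma gd: "gs N0 \<phi> \<Longrightarrow> gs N0 (gd N0 e \<phi>) \<and> (\<forall>z. ((\<lambda>t. \<phi> (z + t *\<^sub>R e)) has_real_derivative gd N0 e \<phi> z) (at 0))"
  unfolding gd_def by (rule someI_ex[OF gs_deriv])

lemma conv_bound:
  assumes h: "goodh N0 h" and g: "gs N0 \<phi>"
  shows "\<bar>conv h \<phi> x\<bar> \<le> gC N0 \<phi> * conv h (Psi N0) x"
proof -
  have hm[measurable]: "h \<in> borel_measurable borel" and h0: "\<And>y. 0 \<le> h y"
    and int: "integrable lborel (\<lambda>y. Psi N0 (x - y) * h y)" using h unfolding goodh_def by auto
  have \<phi>m[measurable]: "\<phi> \<in> borel_measurable borel" by (rule gs_meas[OF g])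
  have "\<bar>conv h \<phi> x\<bar> \<le> (\<integral>y. norm (\<phi> (x - y) * h y) \<partial>lborel)"
    unfolding conv_def using integral_norm_bound[of lborel "\<lambda>y. \<phi> (x - y) * h y"] by simp
  also have "\<dots> \<le> (\<integral>y. gC N0 \<phi> * (Psi N0 (x - y) * h y) \<partial>lborel)"
  proof (rule integral_mono)
    show "integrable lborel (\<lambda>y. gC N0 \<phi> * (Psi N0 (x - y) * h y))" using int by simp
    show "integrable lborel (\<lambda>y. norm (\<phi> (x - y) * h y))"
    proof (rule Bochner_Integration.integrable_bound)
      show "integrable lborel (\<lambda>y. gC N0 \<phi> * (Psi N0 (x - y) * h y))" using int by simp
      show "(\<lambda>y. norm (\<phi> (x - y) * h y)) \<in> borel_measurable lborel" by measurable
      show "AE y in lborel. norm (norm (\<phi> (x - y) * h y)) \<le> norm (gC N0 \<phi> * (Psi N0 (x - y) * h y))"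
      proof (intro AE_I2)
        fix y
        have "\<bar>\<phi> (x - y)\<bar> * h y \<le> gC N0 \<phi> * Psi N0 (x - y) * h y"
          using gC[OF g, of "x - y"] h0[of y] by (intro mult_right_mono) auto
        then show "norm (norm (\<phi> (x - y) * h y)) \<le> norm (gC N0 \<phi> * (Psi N0 (x - y) * h y))"
          using h0[of y] gC_nonneg[OF g] Psi_pos[of N0 "x - y"] by (simp add: abs_mult mult.assoc)
      qed
    qed
    fix y
    show "norm (\<phi> (x - y) * h y) \<le> gC N0 \<phi> * (Psi N0 (x - y) * h y)"
      using gC[OF g, of "x - y"] h0[of y] by (simp add: abs_mult) (metis mult.assoc mult_right_mono)
  qed
  also have "\<dots> = gC N0 \<phi> * conv h (Psi N0) x" unfolding conv_def by simp
  finally show ?thesis .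
qed

lemma conv_deriv:
  assumes N0: "N0 \<ge> 0" and e: "norm e = 1" and h: "goodh N0 h" and g: "gs N0 \<phi>"
  shows "((\<lambda>t. conv h \<phi> (x + t *\<^sub>R e)) has_real_derivative conv h (gd N0 e \<phi>) x) (at 0)"
proof -
  have hm[measurable]: "h \<in> borel_measurable borel" and h0: "\<And>y. 0 \<le> h y"
    and int: "\<And>x. integrable lborel (\<lambda>y. Psi N0 (x - y) * h y)" using h unfolding goodh_def by auto
  have g': "gs N0 (gd N0 e \<phi>)" and d: "\<And>z. ((\<lambda>t. \<phi> (z + t *\<^sub>R e)) has_real_derivative gd N0 e \<phi> z) (at 0)"
    using gd[OF g, of e] by auto
  show ?thesis unfolding conv_def
    by (rule DI[OF N0 e hm h0 int gs_meas[OF g] gs_meas[OF g'] gC[OF g] gC[OF g'] d])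
qed

definition Fs :: "(real^'n::finite \<Rightarrow> real) \<Rightarrow> (real^'n \<Rightarrow> real) list \<Rightarrow> real^'n \<Rightarrow> real" where
  "Fs h fs x = prod_list (map (\<lambda>\<phi>. conv h \<phi> x) fs)"

definition teval :: "real \<Rightarrow> (real^'n::finite \<Rightarrow> real) \<Rightarrow> real \<times> real \<times> (real^'n \<Rightarrow> real) list \<Rightarrow> real^'n \<Rightarrow> real" where
  "teval N0 h t x = (case t of (c, r, fs) \<Rightarrow> c * conv h (Psi N0) x powr r * Fs h fs x)"

definition sev :: "real \<Rightarrow> (real^'n::finite \<Rightarrow> real) \<Rightarrow> (real \<times> real \<times> (real^'n \<Rightarrow> real) list) list \<Rightarrow> real^'n \<Rightarrow> real" where
  "sev N0 h ts x = sum_list (map (\<lambda>t. teval N0 h t x) ts)"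

definition tval :: "real \<Rightarrow> real \<Rightarrow> real \<times> real \<times> (real^'n::finite \<Rightarrow> real) list \<Rightarrow> bool" where
  "tval N0 l t = (case t of (c, r, fs) \<Rightarrow> (\<forall>\<phi>\<in>set fs. gs N0 \<phi>) \<and> r + real (length fs) = l)"

lemma Fs_Nil[simp]: "Fs h [] x = 1" and Fs_Cons[simp]: "Fs h (\<phi> # fs) x = conv h \<phi> x * Fs h fs x"
  unfolding Fs_def by simp_all

lemma prod_deriv:
  fixes e :: "real^'n::finite"
  assumes N0: "N0 \<ge> 0" and e: "norm e = 1"
  shows "(\<forall>\<phi>\<in>set fs. gs N0 \<phi>) \<Longrightarrow> \<exists>gss. (\<forall>g\<in>set gss. (\<forall>\<phi>\<in>set g. gs N0 \<phi>) \<and> length g = length fs) \<and>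
     (\<forall>h. goodh N0 h \<longrightarrow> (\<forall>x. ((\<lambda>t. Fs h fs (x + t *\<^sub>R e)) has_real_derivative sum_list (map (\<lambda>g. Fs h g x) gss)) (at 0)))"
proof (induction fs)
  case Nil
  then show ?case by (intro exI[of _ "[]"]) auto
next
  case (Cons \<phi> fs)
  then have g\<phi>: "gs N0 \<phi>" and gfs: "\<forall>\<phi>\<in>set fs. gs N0 \<phi>" by auto
  from Cons.IH[OF gfs] obtain gss where gss: "\<forall>g\<in>set gss. (\<forall>\<phi>\<in>set g. gs N0 \<phi>) \<and> length g = length fs"
    "\<And>h x. goodh N0 h \<Longrightarrow> ((\<lambda>t. Fs h fs (x + t *\<^sub>R e)) has_real_derivative sum_list (map (\<lambda>g. Fs h g x) gss)) (at 0)"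
    by blast
  show ?case
  proof (intro exI[of _ "(gd N0 e \<phi> # fs) # map (\<lambda>g. \<phi> # g) gss"] conjI allI impI)
    show "\<forall>g\<in>set ((gd N0 e \<phi> # fs) # map ((#) \<phi>) gss). (\<forall>\<phi>\<in>set g. gs N0 \<phi>) \<and> length g = length (\<phi> # fs)"
      using gss(1) gfs g\<phi> gd[OF g\<phi>, of e] by auto
    fix h :: "real^'n \<Rightarrow> real" and x :: "real^'n" assume h: "goodh N0 h"
    have "((\<lambda>t. conv h \<phi> (x + t *\<^sub>R e) * Fs h fs (x + t *\<^sub>R e)) has_real_derivative
        conv h (gd N0 e \<phi>) x * Fs h fs x + sum_list (map (\<lambda>g. Fs h g x) gss) * conv h \<phi> x) (at 0)"
      using DERIV_mult[OF conv_deriv[OF N0 e h g\<phi>, of x] gss(2)[OF h, of x]] by simp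
    moreover have "conv h (gd N0 e \<phi>) x * Fs h fs x + sum_list (map (\<lambda>g. Fs h g x) gss) * conv h \<phi> x
       = sum_list (map (\<lambda>g. Fs h g x) ((gd N0 e \<phi> # fs) # map ((#) \<phi>) gss))"
      by (simp add: o_def sum_list_const_mult sum_list_mult_const mult.commute)
    ultimately show "((\<lambda>t. Fs h (\<phi> # fs) (x + t *\<^sub>R e)) has_real_derivative
        sum_list (map (\<lambda>g. Fs h g x) ((gd N0 e \<phi> # fs) # map ((#) \<phi>) gss))) (at 0)" by simp
  qed
qed

lemma term_deriv:
  fixes e :: "real^'n::finite"
  assumes N0: "N0 \<ge> 0" and e: "norm e = 1" and t: "tval N0 l t"
  shows "\<exists>ts. (\<forall>t'\<in>set ts. tval N0 l t') \<and>
     (\<forall>h. goodh N0 h \<longrightarrow> (\<forall>x. ((\<lambda>s. teval N0 h t (x + s *\<^sub>R e)) has_real_derivative sev N0 h ts x) (at 0)))"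
proof -
  obtain c r fs where tt: "t = (c, r, fs)" by (cases t) auto
  have gfs: "\<forall>\<phi>\<in>set fs. gs N0 \<phi>" and rl: "r + real (length fs) = l" using t unfolding tt tval_def by auto
  obtain gss where gss: "\<forall>g\<in>set gss. (\<forall>\<phi>\<in>set g. gs N0 \<phi>) \<and> length g = length fs"
    "\<And>h x. goodh N0 h \<Longrightarrow> ((\<lambda>t. Fs h fs (x + t *\<^sub>R e)) has_real_derivative sum_list (map (\<lambda>g. Fs h g x) gss)) (at 0)"
    using prod_deriv[OF N0 e gfs] by blast
  have gP: "gs N0 (Psi N0)" by (rule gs_Psi)
  show ?thesis
  proof (intro exI[of _ "(c * r, r - 1, gd N0 e (Psi N0) # fs) # map (\<lambda>g. (c, r, g)) gss"] conjI allI impI)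
    show "\<forall>t'\<in>set ((c * r, r - 1, gd N0 e (Psi N0) # fs) # map (\<lambda>g. (c, r, g)) gss). tval N0 l t'"
      using gss(1) gfs rl gd[OF gP, of e] unfolding tval_def by auto
    fix h :: "real^'n \<Rightarrow> real" and x :: "real^'n" assume h: "goodh N0 h"
    have apos: "0 < conv h (Psi N0) y" for y using h unfolding goodh_def by auto
    have dA: "((\<lambda>s. conv h (Psi N0) (x + s *\<^sub>R e) powr r) has_real_derivative
        r * conv h (Psi N0) x powr (r - 1) * conv h (gd N0 e (Psi N0)) x) (at 0)"
      using DERIV_fun_powr[OF conv_deriv[OF N0 e h gP, of x], of r] apos[of x] by simp
    have "((\<lambda>s. c * (conv h (Psi N0) (x + s *\<^sub>R e) powr r * Fs h fs (x + s *\<^sub>R e))) has_real_derivative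
        c * (r * conv h (Psi N0) x powr (r - 1) * conv h (gd N0 e (Psi N0)) x * Fs h fs x
             + sum_list (map (\<lambda>g. Fs h g x) gss) * conv h (Psi N0) x powr r)) (at 0)"
      using DERIV_cmult[OF DERIV_mult[OF dA gss(2)[OF h, of x]], of c] by simp
    moreover have "c * (r * conv h (Psi N0) x powr (r - 1) * conv h (gd N0 e (Psi N0)) x * Fs h fs x
             + sum_list (map (\<lambda>g. Fs h g x) gss) * conv h (Psi N0) x powr r)
        = sev N0 h ((c * r, r - 1, gd N0 e (Psi N0) # fs) # map (\<lambda>g. (c, r, g)) gss) x"
      unfolding sev_def teval_def
      by (simp add: o_def sum_list_const_mult sum_list_mult_const algebra_simps)
    ultimately show "((\<lambda>s. teval N0 h t (x + s *\<^sub>R e)) has_real_derivative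
        sev N0 h ((c * r, r - 1, gd N0 e (Psi N0) # fs) # map (\<lambda>g. (c, r, g)) gss) x) (at 0)"
      unfolding tt teval_def by (simp add: mult.assoc)
  qed
qed

lemma sum_deriv:
  fixes e :: "real^'n::finite"
  assumes N0: "N0 \<ge> 0" and e: "norm e = 1"
  shows "(\<forall>t\<in>set ts. tval N0 l t) \<Longrightarrow> \<exists>ts'. (\<forall>t'\<in>set ts'. tval N0 l t') \<and>
     (\<forall>h. goodh N0 h \<longrightarrow> (\<forall>x. ((\<lambda>s. sev N0 h ts (x + s *\<^sub>R e)) has_real_derivative sev N0 h ts' x) (at 0)))"
proof (induction ts)
  case Nil
  then show ?case by (intro exI[of _ "[]"]) (auto simp: sev_def)
next
  case (Cons t ts)
  obtain ts1 where ts1: "\<forall>t'\<in>set ts1. tval N0 l t'"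
    "\<And>h x. goodh N0 h \<Longrightarrow> ((\<lambda>s. teval N0 h t (x + s *\<^sub>R e)) has_real_derivative sev N0 h ts1 x) (at 0)"
    using term_deriv[OF N0 e, of l t] Cons.prems by auto
  obtain ts2 where ts2: "\<forall>t'\<in>set ts2. tval N0 l t'"
    "\<And>h x. goodh N0 h \<Longrightarrow> ((\<lambda>s. sev N0 h ts (x + s *\<^sub>R e)) has_real_derivative sev N0 h ts2 x) (at 0)"
    using Cons by auto
  show ?case
  proof (intro exI[of _ "ts1 @ ts2"] conjI allI impI)
    show "\<forall>t'\<in>set (ts1 @ ts2). tval N0 l t'" using ts1(1) ts2(1) by auto
    fix h :: "real^'n \<Rightarrow> real" and x :: "real^'n" assume h: "goodh N0 h"
    show "((\<lambda>s. sev N0 h (t # ts) (x + s *\<^sub>R e)) has_real_derivative sev N0 h (ts1 @ ts2) x) (at 0)"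
      using DERIV_add[OF ts1(2)[OF h, of x] ts2(2)[OF h, of x]] by (simp add: sev_def)
  qed
qed

lemma Fs_bound:
  fixes h :: "real^'n::finite \<Rightarrow> real"
  assumes h: "goodh N0 h"
  shows "(\<forall>\<phi>\<in>set fs. gs N0 \<phi>) \<Longrightarrow> \<bar>Fs h fs x\<bar> \<le> prod_list (map (gC N0) fs) * conv h (Psi N0) x ^ length fs"
proof (induction fs)
  case Nil
  then show ?case by simp
next
  case (Cons \<phi> fs)
  then have g: "gs N0 \<phi>" and gfs: "\<forall>\<phi>\<in>set fs. gs N0 \<phi>" by auto
  have "\<bar>Fs h (\<phi> # fs) x\<bar> = \<bar>conv h \<phi> x\<bar> * \<bar>Fs h fs x\<bar>" by (simp add: abs_mult)
  also have "\<dots> \<le> (gC N0 \<phi> * conv h (Psi N0) x) * (prod_list (map (gC N0) fs) * conv h (Psi N0) x ^ length fs)"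
    by (intro mult_mono conv_bound[OF h g] Cons.IH[OF gfs]) (auto intro: order_trans[OF abs_ge_zero conv_bound[OF h g]])
  also have "\<dots> = prod_list (map (gC N0) (\<phi> # fs)) * conv h (Psi N0) x ^ length (\<phi> # fs)"
    by (simp add: algebra_simps)
  finally show ?case .
qed

lemma term_bound:
  fixes t :: "real \<times> real \<times> (real^'n::finite \<Rightarrow> real) list"
  assumes t: "tval N0 l t"
  shows "\<exists>K. \<forall>h. goodh N0 h \<longrightarrow> (\<forall>x. \<bar>teval N0 h t x\<bar> \<le> K * conv h (Psi N0) x powr l)"
proof -
  obtain c r fs where tt: "t = (c, r, fs)" by (cases t) auto
  have gfs: "\<forall>\<phi>\<in>set fs. gs N0 \<phi>" and rl: "r + real (length fs) = l" using t unfolding tt tval_def by auto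
  show ?thesis
  proof (intro exI[of _ "\<bar>c\<bar> * prod_list (map (gC N0) fs)"] allI impI)
    fix h :: "real^'n \<Rightarrow> real" and x :: "real^'n" assume h: "goodh N0 h"
    define a where "a = conv h (Psi N0) x"
    have a: "a > 0" using h unfolding goodh_def a_def by auto
    have "\<bar>teval N0 h t x\<bar> = \<bar>c\<bar> * a powr r * \<bar>Fs h fs x\<bar>" unfolding tt teval_def a_def by (simp add: abs_mult)
    also have "\<dots> \<le> \<bar>c\<bar> * a powr r * (prod_list (map (gC N0) fs) * a ^ length fs)"
      using Fs_bound[OF h gfs, of x] unfolding a_def by (intro mult_left_mono) auto
    also have "\<dots> = \<bar>c\<bar> * prod_list (map (gC N0) fs) * (a powr r * a powr real (length fs))"
      using a by (simp add: powr_realpow mult_ac)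
    also have "\<dots> = \<bar>c\<bar> * prod_list (map (gC N0) fs) * a powr l"
      using rl by (simp add: powr_add[symmetric])
    finally show "\<bar>teval N0 h t x\<bar> \<le> \<bar>c\<bar> * prod_list (map (gC N0) fs) * conv h (Psi N0) x powr l" unfolding a_def .
  qed
qed

lemma sum_bound:
  fixes ts :: "(real \<times> real \<times> (real^'n::finite \<Rightarrow> real) list) list"
  shows "(\<forall>t\<in>set ts. tval N0 l t) \<Longrightarrow> \<exists>K. \<forall>h. goodh N0 h \<longrightarrow> (\<forall>x. \<bar>sev N0 h ts x\<bar> \<le> K * conv h (Psi N0) x powr l)"
proof (induction ts)
  case Nil
  then show ?case by (intro exI[of _ 0]) (auto simp: sev_def)
next
  case (Cons t ts)
  obtain K1 where K1: "\<And>h x. goodh N0 h \<Longrightarrow> \<bar>teval N0 h t x\<bar> \<le> K1 * conv h (Psi N0) x powr l"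
    using term_bound[of N0 l t] Cons.prems by auto
  obtain K2 where K2: "\<And>h x. goodh N0 h \<Longrightarrow> \<bar>sev N0 h ts x\<bar> \<le> K2 * conv h (Psi N0) x powr l"
    using Cons by auto
  show ?case
  proof (intro exI[of _ "K1 + K2"] allI impI)
    fix h :: "real^'n \<Rightarrow> real" and x :: "real^'n" assume h: "goodh N0 h"
    have "\<bar>sev N0 h (t # ts) x\<bar> \<le> \<bar>teval N0 h t x\<bar> + \<bar>sev N0 h ts x\<bar>" by (simp add: sev_def abs_triangle_ineq)
    also have "\<dots> \<le> K1 * conv h (Psi N0) x powr l + K2 * conv h (Psi N0) x powr l"
      using K1[OF h, of x] K2[OF h, of x] by simp
    finally show "\<bar>sev N0 h (t # ts) x\<bar> \<le> (K1 + K2) * conv h (Psi N0) x powr l" by (simp add: algebra_simps)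
  qed
qed

definition validw :: "real \<Rightarrow> (real^'n::finite \<Rightarrow> real) \<Rightarrow> bool" where
  "validw N0 w \<longleftrightarrow> (\<forall>x. 0 \<le> w x) \<and> (\<forall>x. 0 < Aw N0 w x \<and> Aw N0 w x < \<infinity>)"

definition hw :: "real \<Rightarrow> (real^'n::finite \<Rightarrow> real) \<Rightarrow> (real^'n \<Rightarrow> real)" where
  "hw N0 w = (SOME h. h \<in> borel_measurable borel \<and> (\<forall>y. 0 \<le> h y) \<and>
     (\<forall>x. integrable lborel (\<lambda>y. Psi N0 (x - y) * h y)) \<and>
     (\<forall>x. Aw N0 w x = ennreal (\<integral>y. Psi N0 (x - y) * h y \<partial>lborel)))"

lemma hw:
  fixes w :: "real^'n::finite \<Rightarrow> real"
  assumes v: "validw N0 w"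
  shows "goodh N0 (hw N0 w) \<and> (\<forall>x. enn2real (Aw N0 w x) = conv (hw N0 w) (Psi N0) x)"
proof -
  have fin: "\<And>x. (\<integral>\<^sup>+y. ennreal (Psi N0 (x - y)) * wtilde w y \<partial>lborel) < \<infinity>"
    using v unfolding validw_def Aw_def by auto
  have ex: "\<exists>h. h \<in> borel_measurable borel \<and> (\<forall>y. 0 \<le> h y) \<and>
     (\<forall>x. integrable lborel (\<lambda>y. Psi N0 (x - y) * h y)) \<and>
     (\<forall>x. Aw N0 w x = ennreal (\<integral>y. Psi N0 (x - y) * h y \<partial>lborel))"
    using realize[OF fin] unfolding Aw_def by blast
  have H: "hw N0 w \<in> borel_measurable borel" "\<forall>y. 0 \<le> hw N0 w y"
     "\<forall>x. integrable lborel (\<lambda>y. Psi N0 (x - y) * hw N0 w y)"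
     "\<forall>x. Aw N0 w x = ennreal (conv (hw N0 w) (Psi N0) x)"
    using someI_ex[OF ex] unfolding hw_def[symmetric] conv_def by auto
  have pos: "0 < conv (hw N0 w) (Psi N0) x" for x
    using v H(4) unfolding validw_def by (metis ennreal_less_zero_iff)
  show ?thesis unfolding goodh_def using H pos by (auto simp: less_imp_le)
qed

lemma partials_rep:
  fixes L :: "'n::finite list"
  assumes N0: "N0 \<ge> 0"
  shows "\<exists>ts. (\<forall>t\<in>set ts. tval N0 l t) \<and>
    (\<forall>w :: real^'n \<Rightarrow> real. validw N0 w \<longrightarrow> partials L (\<lambda>z. enn2real (Aw N0 w z) powr l) = sev N0 (hw N0 w) ts)"
proof (induction L)
  case Nil
  show ?case
  proof (intro exI[of _ "[(1, l, [])]"] conjI allI impI)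
    show "\<forall>t\<in>set [(1, l, [])]. tval N0 l t" by (simp add: tval_def)
    fix w :: "real^'n \<Rightarrow> real" assume v: "validw N0 w"
    show "partials [] (\<lambda>z. enn2real (Aw N0 w z) powr l) = sev N0 (hw N0 w) [(1, l, [])]"
      using hw[OF v] by (auto simp: sev_def teval_def)
  qed
next
  case (Cons i L)
  then obtain ts where ts: "\<forall>t\<in>set ts. tval N0 l t"
    "\<And>w :: real^'n \<Rightarrow> real. validw N0 w \<Longrightarrow> partials L (\<lambda>z. enn2real (Aw N0 w z) powr l) = sev N0 (hw N0 w) ts"
    by blast
  obtain ts' where ts': "\<forall>t\<in>set ts'. tval N0 l t"
    "\<And>h x. goodh N0 h \<Longrightarrow> ((\<lambda>s. sev N0 h ts (x + s *\<^sub>R axis i 1)) has_real_derivative sev N0 h ts' x) (at 0)"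
    using sum_deriv[OF N0 norm_axis_1[of i] ts(1)] by blast
  show ?case
  proof (intro exI[of _ ts'] conjI allI impI)
    show "\<forall>t\<in>set ts'. tval N0 l t" by (rule ts'(1))
    fix w :: "real^'n \<Rightarrow> real" assume v: "validw N0 w"
    have g: "goodh N0 (hw N0 w)" using hw[OF v] by blast
    show "partials (i # L) (\<lambda>z. enn2real (Aw N0 w z) powr l) = sev N0 (hw N0 w) ts'"
    proof
      fix x
      show "partials (i # L) (\<lambda>z. enn2real (Aw N0 w z) powr l) x = sev N0 (hw N0 w) ts' x"
        unfolding partials.simps ts(2)[OF v] partial_def
        by (rule DERIV_imp_deriv[OF ts'(2)[OF g]])
    qed
  qed
qed

lemma compare:
  fixes h :: "real^'n::finite \<Rightarrow> real"
  assumes N0: "N0 \<ge> 0" and h: "goodh N0 h"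
  shows "conv h (Psi N0) x \<le> (2 * (1 + (norm x)\<^sup>2)) powr (N0 / 2) * conv h (Psi N0) 0"
    and "conv h (Psi N0) 0 \<le> (2 * (1 + (norm x)\<^sup>2)) powr (N0 / 2) * conv h (Psi N0) x"
proof -
  have h0: "\<And>y. 0 \<le> h y" and int: "\<And>x. integrable lborel (\<lambda>y. Psi N0 (x - y) * h y)"
    using h unfolding goodh_def by auto
  define B where "B = (2 * (1 + (norm x)\<^sup>2)) powr (N0 / 2)"
  have "conv h (Psi N0) x \<le> (\<integral>y. B * (Psi N0 (0 - y) * h y) \<partial>lborel)"
    unfolding conv_def
  proof (rule integral_mono)
    show "integrable lborel (\<lambda>y. Psi N0 (x - y) * h y)" by (rule int)
    show "integrable lborel (\<lambda>y. B * (Psi N0 (0 - y) * h y))" using int[of 0] by simp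
    fix y
    have "Psi N0 ((0 - y) + x) \<le> B * Psi N0 (0 - y)" unfolding B_def by (rule peetre[OF N0])
    then have "Psi N0 (x - y) \<le> B * Psi N0 (0 - y)" by (simp add: algebra_simps)
    then show "Psi N0 (x - y) * h y \<le> B * (Psi N0 (0 - y) * h y)"
      using h0[of y] by (metis mult.assoc mult_right_mono)
  qed
  then show "conv h (Psi N0) x \<le> (2 * (1 + (norm x)\<^sup>2)) powr (N0 / 2) * conv h (Psi N0) 0"
    unfolding B_def conv_def by simp
  have "conv h (Psi N0) 0 \<le> (\<integral>y. B * (Psi N0 (x - y) * h y) \<partial>lborel)"
    unfolding conv_def
  proof (rule integral_mono)
    show "integrable lborel (\<lambda>y. Psi N0 (0 - y) * h y)" by (rule int)
    show "integrable lborel (\<lambda>y. B * (Psi N0 (x - y) * h y))" using int[of x] by simp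
    fix y
    have "Psi N0 ((x - y) + (- x)) \<le> (2 * (1 + (norm (- x))\<^sup>2)) powr (N0 / 2) * Psi N0 (x - y)" by (rule peetre[OF N0])
    then have "Psi N0 (0 - y) \<le> B * Psi N0 (x - y)" unfolding B_def by (simp add: algebra_simps)
    then show "Psi N0 (0 - y) * h y \<le> B * (Psi N0 (x - y) * h y)"
      using h0[of y] by (metis mult.assoc mult_right_mono)
  qed
  then show "conv h (Psi N0) 0 \<le> (2 * (1 + (norm x)\<^sup>2)) powr (N0 / 2) * conv h (Psi N0) x"
    unfolding B_def conv_def by simp
qed

lemma powr_compare:
  fixes a a0 B l :: real
  assumes a: "a > 0" and a0: "a0 > 0" and B: "B > 0" and le1: "a \<le> B * a0" and le2: "a0 \<le> B * a"
  shows "a powr l \<le> B powr \<bar>l\<bar> * a0 powr l"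
proof (cases "l \<ge> 0")
  case True
  have "a powr l \<le> (B * a0) powr l" using a le1 True by (intro powr_mono2) auto
  also have "\<dots> = B powr \<bar>l\<bar> * a0 powr l" using True B a0 by (simp add: powr_mult)
  finally show ?thesis .
next
  case False
  have "a0 / B \<le> a" using le2 B by (simp add: divide_le_eq mult.commute)
  then have "a powr l \<le> (a0 / B) powr l" using False a0 B by (intro powr_mono2') auto
  also have "\<dots> = a0 powr l / B powr l" using a0 B by (simp add: powr_divide)
  also have "\<dots> = B powr (- l) * a0 powr l" by (simp add: powr_minus divide_inverse mult.commute)
  also have "\<dots> = B powr \<bar>l\<bar> * a0 powr l" using False by simp
  finally show ?thesis .
qed

theorem lemma6p4:
  fixes N0 :: real and l :: real and \<gamma> :: "'n::finite \<Rightarrow> nat"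
  assumes "N0 > real CARD('n)"
  shows "\<exists>C::real. \<forall>w :: real ^ 'n \<Rightarrow> real.
           (\<forall>x. 0 \<le> w x) \<longrightarrow> (\<forall>x. 0 < Aw N0 w x \<and> Aw N0 w x < \<infinity>) \<longrightarrow>
           (\<forall>x. \<bar>Dmulti \<gamma> (\<lambda>z. enn2real (Aw N0 w z) powr l) x\<bar>
                   \<le> C * enn2real (Aw N0 w x) powr l
                \<and> C * enn2real (Aw N0 w x) powr l
                   \<le> C\<^sup>2 * (1 + (norm x)\<^sup>2) powr (N0 * \<bar>l\<bar> / 2) * enn2real (Aw N0 w 0) powr l)"
proof -
  have N0: "N0 \<ge> 0" using assms by (smt (verit) of_nat_0_le_iff)
  define L :: "'n list" where "L = (SOME L. \<forall>i. count_list L i = \<gamma> i)"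
  obtain ts where ts: "\<forall>t\<in>set ts. tval N0 l t"
    "\<And>w :: real^'n \<Rightarrow> real. validw N0 w \<Longrightarrow> partials L (\<lambda>z. enn2real (Aw N0 w z) powr l) = sev N0 (hw N0 w) ts"
    using partials_rep[OF N0, where L=L and l=l] by blast
  obtain K where K: "\<And>h :: real^'n \<Rightarrow> real. \<And>x. goodh N0 h \<Longrightarrow> \<bar>sev N0 h ts x\<bar> \<le> K * conv h (Psi N0) x powr l"
    using sum_bound[OF ts(1)] by blast
  define C where "C = max (max K 1) (2 powr (N0 * \<bar>l\<bar> / 2))"
  have C1: "C \<ge> 1" "C \<ge> K" "C \<ge> 2 powr (N0 * \<bar>l\<bar> / 2)" unfolding C_def by auto
  show ?thesis
  proof (intro exI[of _ C] allI impI conjI)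
    fix w :: "real^'n \<Rightarrow> real" and x :: "real^'n"
    assume w1: "\<forall>x. 0 \<le> w x" and w2: "\<forall>x. 0 < Aw N0 w x \<and> Aw N0 w x < \<infinity>"
    have v: "validw N0 w" unfolding validw_def using w1 w2 by blast
    define h where "h = hw N0 w"
    have g: "goodh N0 h" and A: "\<And>x. enn2real (Aw N0 w x) = conv h (Psi N0) x"
      using hw[OF v] unfolding h_def by auto
    have apos: "\<And>x. 0 < conv h (Psi N0) x" using g unfolding goodh_def by auto
    have D: "Dmulti \<gamma> (\<lambda>z. enn2real (Aw N0 w z) powr l) = sev N0 h ts"
      unfolding Dmulti_def L_def[symmetric] ts(2)[OF v] h_def ..
    have "\<bar>sev N0 h ts x\<bar> \<le> K * conv h (Psi N0) x powr l" by (rule K[OF g])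
    also have "\<dots> \<le> C * conv h (Psi N0) x powr l" using C1 by (intro mult_right_mono) auto
    finally show "\<bar>Dmulti \<gamma> (\<lambda>z. enn2real (Aw N0 w z) powr l) x\<bar> \<le> C * enn2real (Aw N0 w x) powr l"
      by (subst D) (simp only: A)
    define B where "B = (2 * (1 + (norm x)\<^sup>2)) powr (N0 / 2)"
    have Bpos: "B > 0" unfolding B_def using pos1[of x] by simp
    have pc: "conv h (Psi N0) x powr l \<le> B powr \<bar>l\<bar> * conv h (Psi N0) 0 powr l"
      using powr_compare[OF apos apos Bpos compare[OF N0 g, of x, folded B_def]] .
    have "B powr \<bar>l\<bar> = 2 powr (N0 * \<bar>l\<bar> / 2) * (1 + (norm x)\<^sup>2) powr (N0 * \<bar>l\<bar> / 2)"
    proof -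
      have "B powr \<bar>l\<bar> = (2 * (1 + (norm x)\<^sup>2)) powr (N0 / 2 * \<bar>l\<bar>)" unfolding B_def by (rule powr_powr)
      also have "\<dots> = 2 powr (N0 / 2 * \<bar>l\<bar>) * (1 + (norm x)\<^sup>2) powr (N0 / 2 * \<bar>l\<bar>)"
        by (rule powr_mult)
      finally show ?thesis by simp
    qed
    also have "\<dots> \<le> C * (1 + (norm x)\<^sup>2) powr (N0 * \<bar>l\<bar> / 2)"
      using C1 by (intro mult_right_mono) auto
    finally have "conv h (Psi N0) x powr l \<le> C * (1 + (norm x)\<^sup>2) powr (N0 * \<bar>l\<bar> / 2) * conv h (Psi N0) 0 powr l"
      using pc by (smt (verit) mult_right_mono powr_ge_zero)
    then have "C * conv h (Psi N0) x powr l \<le> C * (C * (1 + (norm x)\<^sup>2) powr (N0 * \<bar>l\<bar> / 2) * conv h (Psi N0) 0 powr l)"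
      using C1 by (intro mult_left_mono) auto
    then show "C * enn2real (Aw N0 w x) powr l \<le> C\<^sup>2 * (1 + (norm x)\<^sup>2) powr (N0 * \<bar>l\<bar> / 2) * enn2real (Aw N0 w 0) powr l"
      unfolding A by (simp add: power2_eq_square mult.assoc)
  qed
qed

end
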